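(* Let $R\subset S$ be an FCP ring extension which is a $\mathcal P$-extension, with Loewy series $\{S_i\}_{i=0}^n$. Then $R\subset S$ is distributive if and only if $S_i\subset S_{i+1}$ is Boolean for each $0\leq i\leq n-1$. If these conditions hold, then $R\subset S$ has FIP.
   Context: All rings are commutative with identity. $[R,S]$ is the lattice of $R$-subalgebras of $S$ (meet = intersection, join = product). FCP: every chain in $[R,S]$ is finite; FIP: $[R,S]$ is finite. $T\subset U$ minimal means $[T,U]=\{T,U\}$; atoms of $[R,S]$ are $T$ with $R\subset T$ minimal; the socle $\mathcal S[R,S]$ is the product of all atoms. Loewy series: $S_0=R$, $S_{i+1}=\mathcal S[S_i,S]$ while $S_i\neq S$, $n$ least with $S_n=S$. An FCP extension with Loewy series $\{S_i\}_{i=0}^n$ is a $\mathcal P$-extension if $[R,S]=\bigcup_{i=0}^{n-1}[S_i,S_{i+1}]$. Distributive: $[R,S]$ is a distributive lattice; Boolean: distributive and every element has a complement ($T\cap T'=R$, $TT'=S$). *)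

theory Defs
  imports Main
begin

text \<open>Rings are commutative with identity; a ring extension R \<subseteq> S is modelled by two
  unital subrings R \<subseteq> S of an ambient commutative ring (a type of class comm_ring_1).\<close>

definition is_subring :: "'a::comm_ring_1 set \<Rightarrow> bool" where
  "is_subring T \<longleftrightarrow> 0 \<in> T \<and> 1 \<in> T \<and>
     (\<forall>x\<in>T. \<forall>y\<in>T. x + y \<in> T \<and> x - y \<in> T \<and> x * y \<in> T)"

definition interval :: "'a::comm_ring_1 set \<Rightarrow> 'a set \<Rightarrow> 'a set set" where
  "interval A B = {T. is_subring T \<and> A \<subseteq> T \<and> T \<subseteq> B}"

definition gen_subring :: "'a::comm_ring_1 set \<Rightarrow> 'a set" where
  "gen_subring X = \<Inter> {V. is_subring V \<and> X \<subseteq> V}"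

definition ring_prod :: "'a::comm_ring_1 set \<Rightarrow> 'a set \<Rightarrow> 'a set" where
  "ring_prod T U = gen_subring (T \<union> U)"

definition FCP :: "'a::comm_ring_1 set \<Rightarrow> 'a set \<Rightarrow> bool" where
  "FCP A B \<longleftrightarrow> (\<forall>C. C \<subseteq> interval A B \<and> (\<forall>X\<in>C. \<forall>Y\<in>C. X \<subseteq> Y \<or> Y \<subseteq> X) \<longrightarrow> finite C)"

definition FIP :: "'a::comm_ring_1 set \<Rightarrow> 'a set \<Rightarrow> bool" where
  "FIP A B \<longleftrightarrow> finite (interval A B)"

definition minimal_ext :: "'a::comm_ring_1 set \<Rightarrow> 'a set \<Rightarrow> bool" where
  "minimal_ext T U \<longleftrightarrow> T \<subset> U \<and> interval T U = {T, U}"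

definition atoms :: "'a::comm_ring_1 set \<Rightarrow> 'a set \<Rightarrow> 'a set set" where
  "atoms A B = {T \<in> interval A B. minimal_ext A T}"

definition socle :: "'a::comm_ring_1 set \<Rightarrow> 'a set \<Rightarrow> 'a set" where
  "socle A B = gen_subring (A \<union> \<Union> (atoms A B))"

primrec loewy :: "'a::comm_ring_1 set \<Rightarrow> 'a set \<Rightarrow> nat \<Rightarrow> 'a set" where
  "loewy R S 0 = R"
| "loewy R S (Suc i) = (if loewy R S i = S then S else socle (loewy R S i) S)"

definition loewy_length :: "'a::comm_ring_1 set \<Rightarrow> 'a set \<Rightarrow> nat" where
  "loewy_length R S = (LEAST n. loewy R S n = S)"

definition P_ext :: "'a::comm_ring_1 set \<Rightarrow> 'a set \<Rightarrow> bool" where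
  "P_ext R S \<longleftrightarrow> FCP R S \<and> (\<exists>n. loewy R S n = S) \<and>
     interval R S = (\<Union>i<loewy_length R S. interval (loewy R S i) (loewy R S (Suc i)))"

definition distributive_ext :: "'a::comm_ring_1 set \<Rightarrow> 'a set \<Rightarrow> bool" where
  "distributive_ext A B \<longleftrightarrow> (\<forall>T\<in>interval A B. \<forall>U\<in>interval A B. \<forall>V\<in>interval A B.
     T \<inter> ring_prod U V = ring_prod (T \<inter> U) (T \<inter> V))"

definition boolean_ext :: "'a::comm_ring_1 set \<Rightarrow> 'a set \<Rightarrow> bool" where
  "boolean_ext A B \<longleftrightarrow> distributive_ext A B \<and>
     (\<forall>T\<in>interval A B. \<exists>T'\<in>interval A B. T \<inter> T' = A \<and> ring_prod T T' = B)"

end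

theory Submission
  imports Defs
begin

lemma gs_subring: "is_subring (gen_subring X)"
  unfolding gen_subring_def is_subring_def by auto

lemma gs_incl: "X \<subseteq> gen_subring X"
  unfolding gen_subring_def by auto

lemma gs_least: "X \<subseteq> V \<Longrightarrow> is_subring V \<Longrightarrow> gen_subring X \<subseteq> V"
  unfolding gen_subring_def by auto

lemma gs_mono: "X \<subseteq> Y \<Longrightarrow> gen_subring X \<subseteq> gen_subring Y"
  unfolding gen_subring_def by auto

lemma gs_id: "is_subring V \<Longrightarrow> gen_subring V = V"
  using gs_incl gs_least by blast

lemma gs_absorb: "gen_subring (P \<union> gen_subring Q) = gen_subring (P \<union> Q)"
proof
  show "gen_subring (P \<union> gen_subring Q) \<subseteq> gen_subring (P \<union> Q)"
    apply (rule gs_least[OF _ gs_subring])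
    using gs_incl[of "P \<union> Q"] gs_mono[of Q "P \<union> Q"] by blast
  show "gen_subring (P \<union> Q) \<subseteq> gen_subring (P \<union> gen_subring Q)"
    apply (rule gs_mono) using gs_incl[of Q] by blast
qed

lemma gs_absorb2: "gen_subring (gen_subring Q \<union> P) = gen_subring (Q \<union> P)"
  using gs_absorb[of P Q] by (simp add: Un_commute)

lemma subring_Int: "is_subring A \<Longrightarrow> is_subring B \<Longrightarrow> is_subring (A \<inter> B)"
  unfolding is_subring_def by auto

lemma interval_Int: "T \<in> interval A B \<Longrightarrow> U \<in> interval A B \<Longrightarrow> T \<inter> U \<in> interval A B"
  unfolding interval_def using subring_Int by auto

lemma gs_interval: "R \<subseteq> X \<Longrightarrow> X \<subseteq> S \<Longrightarrow> is_subring S \<Longrightarrow> gen_subring X \<in> interval R S"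
  unfolding interval_def using gs_subring gs_incl gs_least by blast

lemma loewy_mono_Suc: "loewy R S i \<subseteq> loewy R S (Suc i)"
proof (cases "loewy R S i = S")
  case True then show ?thesis by simp
next
  case False then show ?thesis
    using gs_incl[of "loewy R S i \<union> \<Union> (atoms (loewy R S i) S)"] by (simp add: socle_def)
qed

lemma loewy_mono: "i \<le> j \<Longrightarrow> loewy R S i \<subseteq> loewy R S j"
  by (rule lift_Suc_mono_le[of "loewy R S", OF loewy_mono_Suc])

lemma atoms_sub: "atoms X S \<subseteq> interval X S"
  unfolding atoms_def by auto

lemma socle_le: "is_subring S \<Longrightarrow> X \<subseteq> S \<Longrightarrow> socle X S \<subseteq> S"
  unfolding socle_def apply (rule gs_least) using atoms_sub[of X S] by (auto simp: interval_def)

lemma loewy_interval: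
  assumes "is_subring R" "is_subring S" "R \<subseteq> S"
  shows "loewy R S i \<in> interval R S"
proof (induction i)
  case 0 then show ?case using assms by (simp add: interval_def)
next
  case (Suc i)
  show ?case
  proof (cases "loewy R S i = S")
    case True then show ?thesis using assms by (simp add: interval_def)
  next
    case False
    have "socle (loewy R S i) S \<in> interval R S"
      unfolding socle_def apply (rule gs_interval)
      using Suc atoms_sub[of "loewy R S i" S] assms by (auto simp: interval_def)
    then show ?thesis using False by simp
  qed
qed

lemma loewy_lt: "i < loewy_length R S \<Longrightarrow> loewy R S i \<noteq> S"
  unfolding loewy_length_def by (rule not_less_Least)

lemma atom_meet:
  assumes "a \<in> atoms X S" "is_subring T" "X \<subseteq> T"
  shows "T \<inter> a = X \<or> T \<inter> a = a"
proof -
  have a: "is_subring a" "X \<subseteq> a" "interval X a = {X, a}"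
    using assms(1) by (auto simp: atoms_def interval_def minimal_ext_def)
  have "T \<inter> a \<in> interval X a" unfolding interval_def
    using a(1,2) assms(2,3) subring_Int[of T a] by blast
  then show ?thesis using a(3) by simp
qed

lemma atoms_distinct:
  assumes "a \<in> atoms X S" "b \<in> atoms X S" "a \<noteq> b"
  shows "a \<inter> b = X"
proof -
  have a: "is_subring a" "X \<subset> a" using assms(1) by (auto simp: atoms_def interval_def minimal_ext_def)
  have b: "is_subring b" "X \<subset> b" "interval X b = {X, b}"
    using assms(2) by (auto simp: atoms_def interval_def minimal_ext_def)
  from atom_meet[OF assms(2) a(1)] a have "a \<inter> b = X \<or> a \<inter> b = b" by auto
  moreover have "a \<inter> b \<noteq> b"
  proof
    assume "a \<inter> b = b"
    then have "b \<subseteq> a" by auto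
    from atom_meet[OF assms(1) b(1)] b have "b \<inter> a = X \<or> b \<inter> a = a" by auto
    then show False using \<open>b \<subseteq> a\<close> a b assms(3) by auto
  qed
  ultimately show ?thesis by auto
qed

lemma fin_distrib:
  assumes D: "distributive_ext R S" and S: "is_subring S"
    and T: "T \<in> interval R S" and X: "X \<in> interval R S" "X \<subseteq> T"
    and A: "finite A" "A \<subseteq> interval R S"
  shows "T \<inter> gen_subring (X \<union> \<Union>A) = gen_subring (X \<union> \<Union>((\<inter>) T ` A))"
  using A
proof (induction A rule: finite_induct)
  case empty
  have "is_subring X" using X by (auto simp: interval_def)
  then show ?case using X by (simp add: gs_id Int_absorb1)
next
  case (insert a A)
  let ?G = "gen_subring (X \<union> \<Union>A)"
  have G: "?G \<in> interval R S"
    apply (rule gs_interval) using X insert.prems S by (auto simp: interval_def)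
  have a: "a \<in> interval R S" using insert.prems by auto
  have e1: "gen_subring (X \<union> \<Union>(insert a A)) = ring_prod a ?G"
    unfolding ring_prod_def gs_absorb by (rule arg_cong[where f=gen_subring]) auto
  have "T \<inter> gen_subring (X \<union> \<Union>(insert a A)) = ring_prod (T \<inter> a) (T \<inter> ?G)"
    using D T a G unfolding e1 distributive_ext_def by blast
  also have "\<dots> = ring_prod (T \<inter> a) (gen_subring (X \<union> \<Union>((\<inter>) T ` A)))"
    using insert by simp
  also have "\<dots> = gen_subring (X \<union> \<Union>((\<inter>) T ` insert a A))"
    unfolding ring_prod_def gs_absorb by (rule arg_cong[where f=gen_subring]) auto
  finally show ?case .
qed

lemma atoms_finite:
  assumes D: "distributive_ext R S" and F: "FCP R S" and S: "is_subring S"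
    and X: "X \<in> interval R S"
  shows "finite (atoms X S)"
proof (rule ccontr)
  assume "infinite (atoms X S)"
  then obtain f :: "nat \<Rightarrow> 'a set" where f: "inj f" "range f \<subseteq> atoms X S"
    using infinite_iff_countable_subset[THEN iffD1] by metis
  have Xs: "R \<subseteq> X" "X \<subseteq> S" "is_subring X" using X by (auto simp: interval_def)
  have ARS: "atoms X S \<subseteq> interval R S" using atoms_sub[of X S] Xs by (auto simp: interval_def)
  define G where "G n = gen_subring (X \<union> \<Union>(f ` {..<n}))" for n
  have fI: "f k \<subseteq> S" for k using f ARS by (auto simp: interval_def)
  have GI: "G n \<in> interval R S" for n
    unfolding G_def apply (rule gs_interval) using Xs fI S by auto
  have Gmono: "m \<le> n \<Longrightarrow> G m \<subseteq> G n" for m n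
    unfolding G_def by (rule gs_mono) auto
  have notin: "\<not> f n \<subseteq> G n" for n
  proof
    assume sub: "f n \<subseteq> G n"
    have fn: "f n \<in> atoms X S" using f by auto
    then have fnI: "f n \<in> interval R S" "X \<subset> f n"
      using ARS by (auto simp: atoms_def minimal_ext_def)
    have "f n \<inter> G n = gen_subring (X \<union> \<Union>((\<inter>) (f n) ` f ` {..<n}))"
      unfolding G_def apply (rule fin_distrib[OF D S fnI(1) X])
      using fnI f ARS by auto
    also have "X \<union> \<Union>((\<inter>) (f n) ` f ` {..<n}) = X"
    proof -
      have "f n \<inter> f k = X" if "k < n" for k
        apply (rule atoms_distinct) using f that by (auto dest: injD)
      then show ?thesis by auto
    qed
    finally have "f n \<inter> G n = X" using gs_id[OF Xs(3)] by simp
    with sub fnI show False by auto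
  qed
  have Gin: "f m \<subseteq> G n" if "m < n" for m n
    unfolding G_def using that gs_incl[of "X \<union> \<Union>(f ` {..<n})"] by auto
  have "inj G"
  proof (rule injI)
    fix m n assume eq: "G m = G n"
    show "m = n"
    proof (rule ccontr)
      assume "m \<noteq> n"
      then have "m < n \<or> n < m" by auto
      then show False using Gin notin eq by metis
    qed
  qed
  then have "infinite (range G)" using finite_imageD infinite_UNIV_nat by blast
  moreover have "range G \<subseteq> interval R S" using GI by auto
  moreover have "\<forall>P\<in>range G. \<forall>Q\<in>range G. P \<subseteq> Q \<or> Q \<subseteq> P"
    using Gmono by (metis imageE nat_le_linear)
  ultimately show False using F unfolding FCP_def by blast
qed

lemma layer_repr:
  assumes D: "distributive_ext R S" and F: "FCP R S" and S: "is_subring S"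
    and X: "X \<in> interval R S" and T: "T \<in> interval X (socle X S)"
  shows "T = gen_subring (X \<union> \<Union>{a \<in> atoms X S. a \<subseteq> T})"
proof -
  let ?A = "atoms X S"
  have Xs: "R \<subseteq> X" "X \<subseteq> S" "is_subring X" using X by (auto simp: interval_def)
  have ARS: "?A \<subseteq> interval R S" using atoms_sub[of X S] Xs by (auto simp: interval_def)
  have Ts: "is_subring T" "X \<subseteq> T" "T \<subseteq> socle X S" using T by (auto simp: interval_def)
  have TS: "T \<subseteq> S" using Ts socle_le[OF S Xs(2)] by auto
  have TI: "T \<in> interval R S" using Ts TS Xs by (auto simp: interval_def)
  have "T = T \<inter> socle X S" using Ts by auto
  also have "\<dots> = gen_subring (X \<union> \<Union>((\<inter>) T ` ?A))"
    unfolding socle_def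
    by (rule fin_distrib[OF D S TI X Ts(2) atoms_finite[OF D F S X] ARS])
  also have "X \<union> \<Union>((\<inter>) T ` ?A) = X \<union> \<Union>{a \<in> ?A. a \<subseteq> T}"
  proof -
    have "T \<inter> a = X \<or> T \<inter> a = a" if "a \<in> ?A" for a
      using atom_meet[OF that Ts(1,2)] .
    then show ?thesis by blast
  qed
  finally show ?thesis .
qed

lemma layer_finite:
  assumes D: "distributive_ext R S" and F: "FCP R S" and S: "is_subring S"
    and X: "X \<in> interval R S"
  shows "finite (interval X (socle X S))"
proof -
  have "interval X (socle X S) \<subseteq> (\<lambda>B. gen_subring (X \<union> \<Union>B)) ` Pow (atoms X S)"
  proof
    fix T assume "T \<in> interval X (socle X S)"
    from layer_repr[OF D F S X this] show "T \<in> (\<lambda>B. gen_subring (X \<union> \<Union>B)) ` Pow (atoms X S)"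
      by blast
  qed
  then show ?thesis using atoms_finite[OF D F S X] finite_subset by blast
qed

lemma layer_boolean:
  assumes D: "distributive_ext R S" and F: "FCP R S" and S: "is_subring S"
    and X: "X \<in> interval R S"
  shows "boolean_ext X (socle X S)"
proof -
  let ?A = "atoms X S"
  let ?Y = "socle X S"
  have Xs: "R \<subseteq> X" "X \<subseteq> S" "is_subring X" using X by (auto simp: interval_def)
  have ARS: "?A \<subseteq> interval R S" using atoms_sub[of X S] Xs by (auto simp: interval_def)
  have YS: "?Y \<subseteq> S" using socle_le[OF S Xs(2)] .
  have sub: "interval X ?Y \<subseteq> interval R S" using Xs YS by (auto simp: interval_def)
  have dist: "distributive_ext X ?Y" using D sub unfolding distributive_ext_def by blast
  have comp: "\<exists>T'\<in>interval X ?Y. T \<inter> T' = X \<and> ring_prod T T' = ?Y" if T: "T \<in> interval X ?Y" for T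
  proof -
    define B where "B = {a \<in> ?A. a \<subseteq> T}"
    define T' where "T' = gen_subring (X \<union> \<Union>(?A - B))"
    have Ts: "is_subring T" "X \<subseteq> T" using T by (auto simp: interval_def)
    have TI: "T \<in> interval R S" using T sub by auto
    have Trep: "T = gen_subring (X \<union> \<Union>B)" unfolding B_def by (rule layer_repr[OF D F S X T])
    have T'I: "T' \<in> interval X ?Y"
      unfolding T'_def interval_def socle_def
      using gs_subring gs_incl[of "X \<union> \<Union>(?A - B)"] gs_mono[of "X \<union> \<Union>(?A - B)" "X \<union> \<Union>?A"]
      by blast
    have "T \<inter> T' = gen_subring (X \<union> \<Union>((\<inter>) T ` (?A - B)))"
      unfolding T'_def
      by (rule fin_distrib[OF D S TI X Ts(2)]) (use atoms_finite[OF D F S X] ARS in auto)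
    also have "X \<union> \<Union>((\<inter>) T ` (?A - B)) = X"
    proof -
      have "T \<inter> a = X" if "a \<in> ?A - B" for a
        using atom_meet[of a X S T] that Ts unfolding B_def by auto
      then show ?thesis by auto
    qed
    finally have m: "T \<inter> T' = X" using gs_id[OF Xs(3)] by simp
    have "ring_prod T T' = gen_subring (gen_subring (X \<union> \<Union>B) \<union> gen_subring (X \<union> \<Union>(?A - B)))"
      unfolding ring_prod_def T'_def using Trep by simp
    also have "\<dots> = gen_subring (X \<union> \<Union>?A)"
      unfolding gs_absorb gs_absorb2 by (rule arg_cong[where f=gen_subring]) (auto simp: B_def)
    finally have j: "ring_prod T T' = ?Y" unfolding socle_def .
    show ?thesis using T'I m j by blast
  qed
  show ?thesis unfolding boolean_ext_def using dist comp by blast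
qed

lemma triv_cases:
  assumes "is_subring T" "is_subring U" "is_subring V"
    and "U \<subseteq> V \<or> V \<subseteq> U \<or> T \<subseteq> U \<or> T \<subseteq> V \<or> (U \<subseteq> T \<and> V \<subseteq> T)"
  shows "T \<inter> ring_prod U V = ring_prod (T \<inter> U) (T \<inter> V)"
proof -
  have TU: "is_subring (T \<inter> U)" and TV: "is_subring (T \<inter> V)"
    using assms subring_Int by auto
  have g: "gen_subring (P \<union> Q) = Q" if "P \<subseteq> Q" "is_subring Q" for P Q :: "'a set"
    using that gs_id by (simp add: Un_absorb1)
  have g2: "gen_subring (P \<union> Q) = P" if "Q \<subseteq> P" "is_subring P" for P Q :: "'a set"
    using that gs_id by (simp add: Un_absorb2)
  consider "U \<subseteq> V" | "V \<subseteq> U" | "T \<subseteq> U" | "T \<subseteq> V" | "U \<subseteq> T \<and> V \<subseteq> T"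
    using assms(4) by blast
  then show ?thesis
  proof cases
    case 1 then show ?thesis unfolding ring_prod_def
      using g[OF 1 assms(3)] g[of "T \<inter> U" "T \<inter> V"] TV by auto
  next
    case 2 then show ?thesis unfolding ring_prod_def
      using g2[OF 2 assms(2)] g2[of "T \<inter> V" "T \<inter> U"] TU by auto
  next
    case 3
    have "T \<subseteq> gen_subring (U \<union> V)" using 3 gs_incl[of "U \<union> V"] by auto
    then show ?thesis unfolding ring_prod_def
      using 3 g2[of "T" "T \<inter> V"] assms(1) gs_id[OF assms(1)] by (simp add: Int_absorb2 Int_absorb1)
  next
    case 4
    have "T \<subseteq> gen_subring (U \<union> V)" using 4 gs_incl[of "U \<union> V"] by auto
    then show ?thesis unfolding ring_prod_def
      using 4 g[of "T \<inter> U" "T"] assms(1) gs_id[OF assms(1)] by (simp add: Int_absorb2 Int_absorb1)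
  next
    case 5
    have "gen_subring (U \<union> V) \<subseteq> T" using 5 gs_least[of "U \<union> V" T] assms(1) by blast
    then show ?thesis unfolding ring_prod_def using 5 by (simp add: Int_absorb1 Int_absorb2)
  qed
qed

theorem theorem8p5:
  fixes R S :: "'a::comm_ring_1 set"
  assumes "is_subring R" and "is_subring S" and "R \<subseteq> S"
    and "FCP R S" and "P_ext R S"
  shows "(distributive_ext R S \<longleftrightarrow>
            (\<forall>i < loewy_length R S. boolean_ext (loewy R S i) (loewy R S (Suc i))))
         \<and> (distributive_ext R S \<longrightarrow> FIP R S)"
proof -
  let ?n = "loewy_length R S"
  let ?L = "loewy R S"
  have LI: "?L i \<in> interval R S" for i using loewy_interval assms(1-3) .
  have Lsuc: "?L (Suc i) = socle (?L i) S" if "i < ?n" for i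
    using loewy_lt[OF that] by simp
  have cover: "interval R S = (\<Union>i<?n. interval (?L i) (?L (Suc i)))"
    using assms(5) unfolding P_ext_def by blast
  have fwd: "boolean_ext (?L i) (?L (Suc i))" if D: "distributive_ext R S" and i: "i < ?n" for i
    using layer_boolean[OF D assms(4) assms(2) LI] Lsuc[OF i] by simp
  have fip: "FIP R S" if D: "distributive_ext R S"
  proof -
    have "finite (interval (?L i) (?L (Suc i)))" if i: "i < ?n" for i
      using layer_finite[OF D assms(4) assms(2) LI] Lsuc[OF i] by simp
    then show ?thesis unfolding FIP_def by (subst cover) auto
  qed
  have bwd: "distributive_ext R S" if B: "\<forall>i < ?n. boolean_ext (?L i) (?L (Suc i))"
  proof -
    have comp: "P \<subseteq> Q" if "a < b" "P \<in> interval (?L a) (?L (Suc a))"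
      "Q \<in> interval (?L b) (?L (Suc b))" for a b P Q
    proof -
      have "?L (Suc a) \<subseteq> ?L b" using loewy_mono[of "Suc a" b R S] that(1) by simp
      then show ?thesis using that by (auto simp: interval_def)
    qed
    show ?thesis unfolding distributive_ext_def
    proof (intro ballI)
      fix T U V assume T: "T \<in> interval R S" and U: "U \<in> interval R S" and V: "V \<in> interval R S"
      have sr: "is_subring T" "is_subring U" "is_subring V" using T U V by (auto simp: interval_def)
      obtain a where a: "a < ?n" "T \<in> interval (?L a) (?L (Suc a))" using T cover by auto
      obtain b where b: "b < ?n" "U \<in> interval (?L b) (?L (Suc b))" using U cover by auto
      obtain c where c: "c < ?n" "V \<in> interval (?L c) (?L (Suc c))" using V cover by auto
      show "T \<inter> ring_prod U V = ring_prod (T \<inter> U) (T \<inter> V)"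
      proof (cases "b = c \<and> a = b")
        case True
        then have "distributive_ext (?L b) (?L (Suc b))"
          using B b(1) unfolding boolean_ext_def by blast
        then show ?thesis using True a b c unfolding distributive_ext_def by blast
      next
        case False
        then have "U \<subseteq> V \<or> V \<subseteq> U \<or> T \<subseteq> U \<or> T \<subseteq> V \<or> (U \<subseteq> T \<and> V \<subseteq> T)"
        proof (cases "b = c")
          case True
          with False have "a \<noteq> b" by auto
          then have "a < b \<or> b < a" by auto
          then show ?thesis using comp a b c True by blast
        next
          case False
          then have "b < c \<or> c < b" by auto
          then show ?thesis using comp b c by blast
        qed
        then show ?thesis using triv_cases sr by blast
      qed
    qed
  qed
  show ?thesis using fwd fip bwd by blast
qed

end
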